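(* Let $(A,B)$ be a finite-dimensional odd-symmetric associative superalgebra over an algebraically closed field $\mathbb{K}$ of characteristic zero. Then $A_{\bar 1}$ is a semi-simple $A_{\bar 0}$-bimodule if and only if $A_{\bar 0}$ is a semi-simple $A_{\bar 0}$-bimodule.
   Context: A superalgebra is $\mathbb{Z}_2$-graded, $A=A_{\bar 0}\oplus A_{\bar 1}$, $A_\alpha A_\beta\subseteq A_{\alpha+\beta}$. An odd-symmetric structure on $A$ is a bilinear form $B$ with $B(A_{\bar 0},A_{\bar 0})=B(A_{\bar 1},A_{\bar 1})=0$ which is supersymmetric ($B(x,y)=(-1)^{|x||y|}B(y,x)$), associative ($B(xy,z)=B(x,yz)$) and non-degenerate. $A_{\bar 0}$ and $A_{\bar 1}$ are $A_{\bar 0}$-bimodules via left and right multiplication; an $A_{\bar 0}$-bimodule is semi-simple if every sub-bimodule admits a complementary sub-bimodule. *)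

theory Defs
  imports Complex_Main "HOL-Computational_Algebra.Polynomial"
begin

definition alg_closed :: "'k::field itself \<Rightarrow> bool" where
  "alg_closed _ \<longleftrightarrow> (\<forall>p::'k poly. degree p > 0 \<longrightarrow> (\<exists>x. poly p x = 0))"

definition fin_dim :: "('k::field \<Rightarrow> 'a::ab_group_add \<Rightarrow> 'a) \<Rightarrow> bool" where
  "fin_dim scale \<longleftrightarrow> (\<exists>S. finite S \<and> module.span scale S = UNIV)"

definition superalgebra ::
  "('k::field \<Rightarrow> 'a::ring \<Rightarrow> 'a) \<Rightarrow> 'a set \<Rightarrow> 'a set \<Rightarrow> bool" where
  "superalgebra scale A0 A1 \<longleftrightarrow>
     vector_space scale \<and>
     (\<forall>c x y. scale c (x * y) = scale c x * y \<and> scale c (x * y) = x * scale c y) \<and>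
     module.subspace scale A0 \<and> module.subspace scale A1 \<and>
     A0 \<inter> A1 = {0} \<and> (\<forall>x. \<exists>x0\<in>A0. \<exists>x1\<in>A1. x = x0 + x1) \<and>
     (\<forall>x\<in>A0. \<forall>y\<in>A0. x * y \<in> A0) \<and> (\<forall>x\<in>A0. \<forall>y\<in>A1. x * y \<in> A1) \<and>
     (\<forall>x\<in>A1. \<forall>y\<in>A0. x * y \<in> A1) \<and> (\<forall>x\<in>A1. \<forall>y\<in>A1. x * y \<in> A0)"

text \<open>Odd-symmetric structure: a bilinear form B, vanishing on A0 x A0 and A1 x A1,
  supersymmetric (B x y = (-1)^(|x||y|) B y x for homogeneous x, y),
  associative and non-degenerate.\<close>
definition odd_symmetric ::
  "('k::field \<Rightarrow> 'a::ring \<Rightarrow> 'a) \<Rightarrow> 'a set \<Rightarrow> 'a set \<Rightarrow> ('a \<Rightarrow> 'a \<Rightarrow> 'k) \<Rightarrow> bool" where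
  "odd_symmetric scale A0 A1 B \<longleftrightarrow>
     (\<forall>x y z. B (x + y) z = B x z + B y z) \<and>
     (\<forall>x y z. B x (y + z) = B x y + B x z) \<and>
     (\<forall>c x y. B (scale c x) y = c * B x y) \<and>
     (\<forall>c x y. B x (scale c y) = c * B x y) \<and>
     (\<forall>x\<in>A0. \<forall>y\<in>A0. B x y = 0) \<and> (\<forall>x\<in>A1. \<forall>y\<in>A1. B x y = 0) \<and>
     (\<forall>x\<in>A0. \<forall>y\<in>A0. B x y = B y x) \<and>
     (\<forall>x\<in>A0. \<forall>y\<in>A1. B x y = B y x) \<and>
     (\<forall>x\<in>A1. \<forall>y\<in>A0. B x y = B y x) \<and>
     (\<forall>x\<in>A1. \<forall>y\<in>A1. B x y = - B y x) \<and>
     (\<forall>x y z. B (x * y) z = B x (y * z)) \<and>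
     (\<forall>x. (\<forall>y. B x y = 0) \<longrightarrow> x = 0)"

definition sub_bimodule ::
  "('k::field \<Rightarrow> 'a::ring \<Rightarrow> 'a) \<Rightarrow> 'a set \<Rightarrow> 'a set \<Rightarrow> 'a set \<Rightarrow> bool" where
  "sub_bimodule scale A0 M N \<longleftrightarrow>
     module.subspace scale N \<and> N \<subseteq> M \<and> (\<forall>a\<in>A0. \<forall>n\<in>N. a * n \<in> N \<and> n * a \<in> N)"

definition semisimple_bimodule ::
  "('k::field \<Rightarrow> 'a::ring \<Rightarrow> 'a) \<Rightarrow> 'a set \<Rightarrow> 'a set \<Rightarrow> bool" where
  "semisimple_bimodule scale A0 M \<longleftrightarrow>
     (\<forall>N. sub_bimodule scale A0 M N \<longrightarrow>
        (\<exists>N'. sub_bimodule scale A0 M N' \<and> N \<inter> N' = {0} \<and>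
              {x + y | x y. x \<in> N \<and> y \<in> N'} = M))"

end

theory Submission
  imports Defs
begin

definition bilin :: "('k::field \<Rightarrow> 'a::ab_group_add \<Rightarrow> 'a) \<Rightarrow> ('a \<Rightarrow> 'a \<Rightarrow> 'k) \<Rightarrow> bool" where
  "bilin scale C \<longleftrightarrow> (\<forall>x y z. C (x+y) z = C x z + C y z) \<and> (\<forall>x y z. C x (y+z) = C x y + C x z)
     \<and> (\<forall>c x y. C (scale c x) y = c * C x y) \<and> (\<forall>c x y. C x (scale c y) = c * C x y)"

lemma bilin_flip: "bilin scale C \<Longrightarrow> bilin scale (\<lambda>a b. C b a)"
  unfolding bilin_def by auto

lemma bilin_0L: "bilin scale C \<Longrightarrow> C 0 y = 0"
  unfolding bilin_def by (metis add_0 add_cancel_right_left)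

lemma bilin_diffL: "bilin scale C \<Longrightarrow> C (x - z) y = C x y - C z y"
  unfolding bilin_def by (metis add_diff_cancel_left' diff_add_cancel eq_diff_eq)

context finite_dimensional_vector_space begin

lemma subspace_perp:
  assumes "bilin scale C"
  shows "subspace {x. \<forall>y\<in>N. C x y = 0}"
  using assms bilin_0L[OF assms] unfolding subspace_def bilin_def by auto

lemma subspace_perp2:
  assumes "bilin scale C"
  shows "subspace {y. C x y = 0}"
  using subspace_perp[OF bilin_flip[OF assms], of "{x}"] by simp

lemma dim_ker1:
  assumes W: "subspace W" and bl: "bilin scale C"
  shows "dim W \<le> dim (W \<inter> {x. C x y = 0}) + 1"
proof (cases "\<forall>w\<in>W. C w y = 0")
  case True then have "W \<inter> {x. C x y = 0} = W" by auto
  then show ?thesis by simp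
next
  case False
  then obtain w0 where w0: "w0 \<in> W" "C w0 y \<noteq> 0" by auto
  let ?K = "W \<inter> {x. C x y = 0}"
  have sK: "subspace ?K"
    using subspace_inter[OF W subspace_perp[OF bl, of "{y}"]] by simp
  have sL: "subspace (span {w0})" by (rule subspace_span)
  have "W \<subseteq> {x + z |x z. x \<in> ?K \<and> z \<in> span {w0}}"
  proof
    fix w assume w: "w \<in> W"
    define c where "c = C w y / C w0 y"
    have e: "w = (w - scale c w0) + scale c w0" by simp
    have "w - scale c w0 \<in> W" using w w0 subspace_diff[OF W] subspace_scale[OF W] by auto
    moreover have "C (w - scale c w0) y = 0"
      using bilin_diffL[OF bl] bl w0 unfolding bilin_def c_def by simp
    moreover have "scale c w0 \<in> span {w0}" by (simp add: span_base span_scale)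
    ultimately show "w \<in> {x + z |x z. x \<in> ?K \<and> z \<in> span {w0}}" using e by blast
  qed
  hence "dim W \<le> dim {x + z |x z. x \<in> ?K \<and> z \<in> span {w0}}" by (rule dim_subset)
  also have "\<dots> \<le> dim ?K + dim (span {w0})" using dim_sums_Int[OF sK sL] by linarith
  also have "dim (span {w0}) \<le> 1" by simp
  finally show ?thesis by simp
qed

lemma dim_perp_fin:
  assumes "finite S" and W: "subspace W" and bl: "bilin scale C"
  shows "dim W \<le> dim (W \<inter> {x. \<forall>y\<in>S. C x y = 0}) + card S"
  using assms(1)
proof (induction S rule: finite_induct)
  case empty then show ?case by simp
next
  case (insert y S)
  let ?P = "W \<inter> {x. \<forall>y\<in>S. C x y = 0}"
  have sP: "subspace ?P" by (rule subspace_inter[OF W subspace_perp[OF bl]])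
  have "dim ?P \<le> dim (?P \<inter> {x. C x y = 0}) + 1" by (rule dim_ker1[OF sP bl])
  moreover have "?P \<inter> {x. C x y = 0} = W \<inter> {x. \<forall>z\<in>insert y S. C x z = 0}" by auto
  ultimately show ?case using insert by simp
qed

lemma dim_perp:
  assumes W: "subspace W" and bl: "bilin scale C"
  shows "dim W \<le> dim (W \<inter> {x. \<forall>y\<in>N. C x y = 0}) + dim N"
proof -
  obtain S where S: "S \<subseteq> N" "independent S" "N \<subseteq> span S" "card S = dim N"
    using basis_exists by metis
  have fS: "finite S" using S(2) finiteI_independent by blast
  have sub: "W \<inter> {x. \<forall>y\<in>S. C x y = 0} \<subseteq> W \<inter> {x. \<forall>y\<in>N. C x y = 0}"
  proof
    fix x assume x: "x \<in> W \<inter> {x. \<forall>y\<in>S. C x y = 0}"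
    have "span S \<subseteq> {y. C x y = 0}"
      by (rule span_minimal) (use x subspace_perp2[OF bl] in auto)
    then show "x \<in> W \<inter> {x. \<forall>y\<in>N. C x y = 0}" using x S(3) by auto
  qed
  show ?thesis using dim_perp_fin[OF fS W bl] dim_subset[OF sub] S(4) by linarith
qed

end

lemma transfer_ss:
  fixes scale :: "'k::field \<Rightarrow> 'a::ring \<Rightarrow> 'a"
  assumes fd: "finite_dimensional_vector_space scale Bs"
  and bl: "bilin scale C" and X: "module.subspace scale X" and Y: "module.subspace scale Y"
  and nd1: "\<And>x. x \<in> Y \<Longrightarrow> \<forall>y\<in>X. C x y = 0 \<Longrightarrow> x = 0"
  and nd2: "\<And>y. y \<in> X \<Longrightarrow> \<forall>x\<in>Y. C x y = 0 \<Longrightarrow> y = 0"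
  and cY: "\<And>N. sub_bimodule scale A0 X N \<Longrightarrow> sub_bimodule scale A0 Y (Y \<inter> {x. \<forall>y\<in>N. C x y = 0})"
  and cX: "\<And>N. sub_bimodule scale A0 Y N \<Longrightarrow> sub_bimodule scale A0 X (X \<inter> {y. \<forall>x\<in>N. C x y = 0})"
  and ss: "semisimple_bimodule scale A0 X"
  shows "semisimple_bimodule scale A0 Y"
proof -
  interpret finite_dimensional_vector_space scale Bs by (rule fd)
  show ?thesis
  unfolding semisimple_bimodule_def
proof (intro allI impI)
  have blf: "bilin scale (\<lambda>a b. C b a)" by (rule bilin_flip[OF bl])
  have z1: "Y \<inter> {x. \<forall>y\<in>X. C x y = 0} = {0}"
    using nd1 bilin_0L[OF bl] subspace_0[OF Y] by auto
  have z2: "X \<inter> {y. \<forall>x\<in>Y. C x y = 0} = {0}"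
    using nd2 bilin_0L[OF blf] subspace_0[OF X] by auto
  have dY: "dim Y \<le> dim X" using dim_perp[OF Y bl, of X] z1 by simp
  have dX: "dim X \<le> dim Y" using dim_perp[OF X blf, of Y] z2 by simp
  fix N0 assume N0: "sub_bimodule scale A0 Y N0"
  define N1 where "N1 = X \<inter> {y. \<forall>x\<in>N0. C x y = 0}"
  have N1: "sub_bimodule scale A0 X N1" unfolding N1_def by (rule cX[OF N0])
  obtain N1' where N1': "sub_bimodule scale A0 X N1'" "N1 \<inter> N1' = {0}"
     "{x + y |x y. x \<in> N1 \<and> y \<in> N1'} = X"
    using ss[unfolded semisimple_bimodule_def, rule_format, OF N1] by (elim exE conjE) blast
  define N0' where "N0' = Y \<inter> {x. \<forall>y\<in>N1'. C x y = 0}"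
  have N0': "sub_bimodule scale A0 Y N0'" unfolding N0'_def by (rule cY[OF N1'(1)])
  have sN0: "subspace N0" "N0 \<subseteq> Y" using N0 unfolding sub_bimodule_def by auto
  have sN0': "subspace N0'" "N0' \<subseteq> Y" using N0' unfolding sub_bimodule_def by auto
  have sN1: "subspace N1" using N1 unfolding sub_bimodule_def by auto
  have sN1': "subspace N1'" using N1'(1) unfolding sub_bimodule_def by auto
  have int: "N0 \<inter> N0' = {0}"
  proof
    show "{0} \<subseteq> N0 \<inter> N0'" using subspace_0[OF sN0(1)] subspace_0[OF sN0'(1)] by auto
    show "N0 \<inter> N0' \<subseteq> {0}"
    proof
      fix x assume x: "x \<in> N0 \<inter> N0'"
      have "\<forall>y\<in>X. C x y = 0"
      proof
        fix y assume "y \<in> X"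
        then obtain a b where ab: "y = a + b" "a \<in> N1" "b \<in> N1'" using N1'(3) by blast
        have "C x a = 0" using x ab unfolding N1_def by auto
        moreover have "C x b = 0" using x ab unfolding N0'_def by auto
        ultimately show "C x y = 0" using bl ab unfolding bilin_def by simp
      qed
      then show "x \<in> {0}" using nd1 x sN0 by auto
    qed
  qed
  let ?S = "{x + y |x y. x \<in> N0 \<and> y \<in> N0'}"
  have sS: "subspace ?S" by (rule subspace_sums[OF sN0(1) sN0'(1)])
  have SY: "?S \<subseteq> Y" using sN0(2) sN0'(2) subspace_add[OF Y] by auto
  have d1: "dim ?S = dim N0 + dim N0'" using dim_sums_Int[OF sN0(1) sN0'(1)] int by simp
  have d2: "dim Y \<le> dim N0' + dim N1'" using dim_perp[OF Y bl, of N1'] unfolding N0'_def by simp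
  have d3: "dim X \<le> dim N1 + dim N0" using dim_perp[OF X blf, of N0] unfolding N1_def by simp
  have d4: "dim X = dim N1 + dim N1'" using dim_sums_Int[OF sN1 sN1'] N1'(2,3) by simp
  have "dim Y \<le> dim ?S" using d1 d2 d3 d4 dX dY by linarith
  then have SYe: "?S = Y" using subspace_dim_equal[OF sS Y SY] by simp
  show "\<exists>N'. sub_bimodule scale A0 Y N' \<and> N0 \<inter> N' = {0} \<and> {x + y |x y. x \<in> N0 \<and> y \<in> N'} = Y"
    by (rule exI[of _ N0']) (intro conjI N0' int SYe)
qed
qed

theorem mainTheorem11:
  fixes scale :: "'k::field_char_0 \<Rightarrow> 'a::ring \<Rightarrow> 'a"
    and A0 A1 :: "'a set" and B :: "'a \<Rightarrow> 'a \<Rightarrow> 'k"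
  assumes "alg_closed TYPE('k)"
    and "superalgebra scale A0 A1"
    and "fin_dim scale"
    and "odd_symmetric scale A0 A1 B"
  shows "semisimple_bimodule scale A0 A1 \<longleftrightarrow> semisimple_bimodule scale A0 A0"
proof -
  note sa = assms(2)[unfolded superalgebra_def]
  note os = assms(4)[unfolded odd_symmetric_def]
  have VS: "vector_space scale" using sa by (elim conjE) assumption
  have s0: "module.subspace scale A0" using sa by (elim conjE) assumption
  have s1: "module.subspace scale A1" using sa by (elim conjE) assumption
  have dec: "\<forall>x. \<exists>x0\<in>A0. \<exists>x1\<in>A1. x = x0 + x1" using sa by (elim conjE) assumption
  have m00: "\<forall>x\<in>A0. \<forall>y\<in>A0. x * y \<in> A0" using sa by (elim conjE) assumption
  have m01: "\<forall>x\<in>A0. \<forall>y\<in>A1. x * y \<in> A1" using sa by (elim conjE) assumption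
  have m10: "\<forall>x\<in>A1. \<forall>y\<in>A0. x * y \<in> A1" using sa by (elim conjE) assumption
  have bl: "bilin scale B" unfolding bilin_def using os by (elim conjE) (intro conjI; assumption)
  have z00: "\<forall>x\<in>A0. \<forall>y\<in>A0. B x y = 0" using os by (elim conjE) assumption
  have z11: "\<forall>x\<in>A1. \<forall>y\<in>A1. B x y = 0" using os by (elim conjE) assumption
  have sy01: "\<forall>x\<in>A0. \<forall>y\<in>A1. B x y = B y x" using os by (elim conjE) assumption
  have sy10: "\<forall>x\<in>A1. \<forall>y\<in>A0. B x y = B y x" using os by (elim conjE) assumption
  have asc: "\<forall>x y z. B (x * y) z = B x (y * z)" using os by (elim conjE) assumption
  have nd: "\<forall>x. (\<forall>y. B x y = 0) \<longrightarrow> x = 0" using os by (elim conjE) assumption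
  have badd: "\<And>x y z. B x (y + z) = B x y + B x z" using bl unfolding bilin_def by auto
  obtain S where S: "finite S" "module.span scale S = UNIV" using assms(3) unfolding fin_dim_def by auto
  interpret V: vector_space scale by (rule VS)
  obtain Bs where Bs: "V.independent Bs" "UNIV \<subseteq> V.span Bs"
    using V.basis_exists[of UNIV] by metis
  have fBs: "finite Bs" using V.independent_span_bound[OF S(1) Bs(1)] S(2) by auto
  interpret F: finite_dimensional_vector_space scale Bs
    by unfold_locales (use fBs Bs in auto)
  have ndA0: "\<And>x. x \<in> A0 \<Longrightarrow> \<forall>y\<in>A1. B x y = 0 \<Longrightarrow> x = 0"
  proof -
    fix x assume x: "x \<in> A0" "\<forall>y\<in>A1. B x y = 0"
    have "\<forall>y. B x y = 0"
    proof
      fix y obtain y0 y1 where "y0 \<in> A0" "y1 \<in> A1" "y = y0 + y1" using dec by blast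
      then show "B x y = 0" using x z00 badd by auto
    qed
    then show "x = 0" using nd by auto
  qed
  have ndA1: "\<And>y. y \<in> A1 \<Longrightarrow> \<forall>x\<in>A0. B x y = 0 \<Longrightarrow> y = 0"
  proof -
    fix x assume x: "x \<in> A1" "\<forall>y\<in>A0. B y x = 0"
    have "\<forall>y. B x y = 0"
    proof
      fix y obtain y0 y1 where "y0 \<in> A0" "y1 \<in> A1" "y = y0 + y1" using dec by blast
      moreover have "B x y0 = B y0 x" using sy10 x \<open>y0 \<in> A0\<close> by blast
      ultimately show "B x y = 0" using x z11 badd by auto
    qed
    then show "x = 0" using nd by auto
  qed
  have cA0: "\<And>N. sub_bimodule scale A0 A1 N \<Longrightarrow> sub_bimodule scale A0 A0 (A0 \<inter> {x. \<forall>y\<in>N. B x y = 0})"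
  proof -
    fix N assume N: "sub_bimodule scale A0 A1 N"
    have sub: "module.subspace scale (A0 \<inter> {x. \<forall>y\<in>N. B x y = 0})"
      by (rule V.subspace_inter[OF s0 F.subspace_perp[OF bl]])
    have NA: "N \<subseteq> A1" "\<forall>a\<in>A0. \<forall>n\<in>N. a * n \<in> N \<and> n * a \<in> N" using N unfolding sub_bimodule_def by auto
    show "?thesis N" unfolding sub_bimodule_def
    proof (intro conjI sub)
      show "A0 \<inter> {x. \<forall>y\<in>N. B x y = 0} \<subseteq> A0" by auto
      show "\<forall>a\<in>A0. \<forall>n\<in>A0 \<inter> {x. \<forall>y\<in>N. B x y = 0}. a * n \<in> A0 \<inter> {x. \<forall>y\<in>N. B x y = 0} \<and> n * a \<in> A0 \<inter> {x. \<forall>y\<in>N. B x y = 0}"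
      proof (intro ballI conjI)
        fix a n assume a: "a \<in> A0" and n: "n \<in> A0 \<inter> {x. \<forall>y\<in>N. B x y = 0}"
        show "a * n \<in> A0 \<inter> {x. \<forall>y\<in>N. B x y = 0}"
        proof (simp add: m00 a n[THEN IntD1], intro ballI)
          fix y assume y: "y \<in> N"
          have "a * n \<in> A0" "y \<in> A1" using m00 a n y NA by auto
          then have "B (a * n) y = B y (a * n)" using sy01 by blast
          also have "\<dots> = B (y * a) n" using asc by simp
          also have "\<dots> = B n (y * a)"
          proof -
            have "y * a \<in> A1" "n \<in> A0" using m10 a n y NA by auto
            then show ?thesis using sy10 by blast
          qed
          also have "\<dots> = 0" using n y a NA by auto
          finally show "B (a * n) y = 0" .
        qed
        show "n * a \<in> A0 \<inter> {x. \<forall>y\<in>N. B x y = 0}"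
        proof (simp add: m00 a n[THEN IntD1], intro ballI)
          fix y assume y: "y \<in> N"
          have "B (n * a) y = B n (a * y)" using asc by simp
          also have "\<dots> = 0" using n y a NA by auto
          finally show "B (n * a) y = 0" .
        qed
      qed
    qed
  qed
  have cA1: "\<And>N. sub_bimodule scale A0 A0 N \<Longrightarrow> sub_bimodule scale A0 A1 (A1 \<inter> {y. \<forall>x\<in>N. B x y = 0})"
  proof -
    fix N assume N: "sub_bimodule scale A0 A0 N"
    have sub: "module.subspace scale (A1 \<inter> {y. \<forall>x\<in>N. B x y = 0})"
      using V.subspace_inter[OF s1 F.subspace_perp[OF bilin_flip[OF bl], of N]] by simp
    have NA: "N \<subseteq> A0" "\<forall>a\<in>A0. \<forall>n\<in>N. a * n \<in> N \<and> n * a \<in> N" using N unfolding sub_bimodule_def by auto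
    show "?thesis N" unfolding sub_bimodule_def
    proof (intro conjI sub)
      show "A1 \<inter> {y. \<forall>x\<in>N. B x y = 0} \<subseteq> A1" by auto
      show "\<forall>a\<in>A0. \<forall>n\<in>A1 \<inter> {y. \<forall>x\<in>N. B x y = 0}. a * n \<in> A1 \<inter> {y. \<forall>x\<in>N. B x y = 0} \<and> n * a \<in> A1 \<inter> {y. \<forall>x\<in>N. B x y = 0}"
      proof (intro ballI conjI)
        fix a n assume a: "a \<in> A0" and n: "n \<in> A1 \<inter> {y. \<forall>x\<in>N. B x y = 0}"
        show "a * n \<in> A1 \<inter> {y. \<forall>x\<in>N. B x y = 0}"
        proof (simp add: m01 a n[THEN IntD1], intro ballI)
          fix y assume y: "y \<in> N"
          have "B y (a * n) = B (y * a) n" using asc by simp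
          also have "\<dots> = 0" using n y a NA by auto
          finally show "B y (a * n) = 0" .
        qed
        show "n * a \<in> A1 \<inter> {y. \<forall>x\<in>N. B x y = 0}"
        proof (simp add: m10 a n[THEN IntD1], intro ballI)
          fix y assume y: "y \<in> N"
          have "y \<in> A0" "n * a \<in> A1" using m10 a n y NA by auto
          then have "B y (n * a) = B (n * a) y" using sy01 by blast
          also have "\<dots> = B n (a * y)" using asc by simp
          also have "\<dots> = B (a * y) n"
          proof -
            have "n \<in> A1" "a * y \<in> A0" using m00 a n y NA by auto
            then show ?thesis using sy10 by blast
          qed
          also have "\<dots> = 0" using n y a NA by auto
          finally show "B y (n * a) = 0" .
        qed
      qed
    qed
  qed
  show ?thesis
  proof
    assume ss1: "semisimple_bimodule scale A0 A1"
    show "semisimple_bimodule scale A0 A0"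
      using F.finite_dimensional_vector_space_axioms bl s1 s0 ndA0 ndA1 cA0 cA1 ss1 by (rule transfer_ss)
  next
    assume ss0: "semisimple_bimodule scale A0 A0"
    show "semisimple_bimodule scale A0 A1"
      by (rule transfer_ss[OF F.finite_dimensional_vector_space_axioms bilin_flip[OF bl] s0 s1 ndA1 ndA0 cA1 cA0 ss0])
  qed
qed

end
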